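(* Let $X$ be a normed space, $1\le r<\infty$, $T>0$, and $a:[0,T]\to X$ continuously differentiable. Then $$\hat V^r(a(t))_{t\in[0,T]}\le 8\,\|a\|_{L^r([0,T];X)}^{1-1/r}\,\|a'\|_{L^r([0,T];X)}^{1/r}.$$
   Context: For a family $(a_t)_{t\in I}$ in a normed space, $\hat V^r(a_t)_{t\in I}=\sup_{t_0<t_1<\dots<t_J\in I}(\sum_{j=1}^J\|a_{t_j}-a_{t_{j-1}}\|^r)^{1/r}$, supremum over all $J$ and all increasing finite sequences in $I$. *)

theory Defs
  imports "HOL-Analysis.Analysis"
begin

text \<open>Valued in ereal since it may be infinite.\<close>
definition rvar :: "real \<Rightarrow> (real \<Rightarrow> 'a::real_normed_vector) \<Rightarrow> real set \<Rightarrow> ereal" where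
  "rvar r a I = (SUP p \<in> {(J, t). (\<forall>j\<le>J. t j \<in> I) \<and> (\<forall>j<J. t j < t (Suc j))}.
      ereal ((\<Sum>j\<in>{1..fst p}. norm (a (snd p j) - a (snd p (j - 1))) powr r) powr (1 / r)))"

definition Lr_norm :: "real \<Rightarrow> real \<Rightarrow> (real \<Rightarrow> 'a::real_normed_vector) \<Rightarrow> real" where
  "Lr_norm r T f = (integral {0..T} (\<lambda>t. norm (f t) powr r)) powr (1 / r)"

end

theory Submission
  imports Defs
begin

definition ee :: "real \<Rightarrow> real \<Rightarrow> real" where
  "ee r x = (if r = 1 then 1 else x powr (r - 1))"

lemma young_pt:
  fixes x y l r :: real
  assumes "0 \<le> x" "0 \<le> y" "0 < l" "1 \<le> r"
  shows "ee r x * y \<le> (1 - 1/r) * (l * x powr r) + (1/r) * (l powr (1 - r) * y powr r)"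
proof (cases "r = 1")
  case True then show ?thesis using assms by (simp add: ee_def)
next
  case False
  then have r1: "1 < r" using assms by simp
  show ?thesis
  proof (cases "x = 0 \<or> y = 0")
    case True
    then have "ee r x * y = 0" using r1 by (auto simp: ee_def)
    moreover have "0 \<le> (1 - 1/r) * (l * x powr r) + (1/r) * (l powr (1 - r) * y powr r)"
      using r1 assms by (intro add_nonneg_nonneg mult_nonneg_nonneg) auto
    ultimately show ?thesis by linarith
  next
    case False
    then have x0: "0 < x" and y0: "0 < y" using assms by auto
    have A: "(l * x powr r) powr (1 - 1/r) = l powr (1 - 1/r) * x powr (r - 1)"
    proof -
      have e: "r * (1 - 1/r) = r - 1" using r1 by (simp add: field_simps)
      have "(l * x powr r) powr (1 - 1/r) = l powr (1 - 1/r) * (x powr r) powr (1 - 1/r)"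
        using x0 assms by (simp add: powr_mult)
      also have "(x powr r) powr (1 - 1/r) = x powr (r * (1 - 1/r))" by (rule powr_powr)
      finally show ?thesis by (simp only: e)
    qed
    have B: "(l powr (1 - r) * y powr r) powr (1/r) = l powr ((1 - r)/r) * y"
      using y0 assms r1 by (simp add: powr_mult powr_powr field_simps)
    have C: "l powr (1 - 1/r) * l powr ((1 - r)/r) = 1"
    proof -
      have "l powr (1 - 1/r) * l powr ((1 - r)/r) = l powr ((1 - 1/r) + (1 - r)/r)"
        by (simp add: powr_add)
      also have "(1 - 1/r) + (1 - r)/r = 0" using r1 by (simp add: field_simps)
      finally show ?thesis using assms by simp
    qed
    have "(l * x powr r) powr (1 - 1/r) * (l powr (1 - r) * y powr r) powr (1/r)
        \<le> (1 - 1/r) * (l * x powr r) + (1/r) * (l powr (1 - r) * y powr r)"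
      by (rule Youngs_inequality_0) (use r1 x0 y0 assms in auto)
    moreover have "(l * x powr r) powr (1 - 1/r) * (l powr (1 - r) * y powr r) powr (1/r) = ee r x * y"
    proof -
      have "(l * x powr r) powr (1 - 1/r) * (l powr (1 - r) * y powr r) powr (1/r)
          = (l powr (1 - 1/r) * l powr ((1 - r)/r)) * (x powr (r - 1) * y)"
        unfolding A B by (simp only: ac_simps)
      also have "\<dots> = x powr (r - 1) * y" unfolding C by simp
      also have "\<dots> = ee r x * y" using r1 by (simp add: ee_def)
      finally show ?thesis .
    qed
    ultimately show ?thesis by simp
  qed
qed

lemma alg1:
  fixes P Q r :: real assumes "0 < P" "0 < Q" "1 \<le> r"
  shows "(Q/P) powr (1/r) * P = P powr (1 - 1/r) * Q powr (1/r)"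
proof -
  have "(Q/P) powr (1/r) * P = Q powr (1/r) * (P powr 1 / P powr (1/r))"
    using assms by (simp add: powr_divide)
  also have "P powr 1 / P powr (1/r) = P powr (1 - 1/r)" by (rule powr_diff[symmetric])
  finally show ?thesis by simp
qed

lemma alg2:
  fixes P Q r :: real assumes "0 < P" "0 < Q" "1 \<le> r"
  shows "((Q/P) powr (1/r)) powr (1 - r) * Q = P powr (1 - 1/r) * Q powr (1/r)"
proof -
  have "((Q/P) powr (1/r)) powr (1 - r) * Q = Q powr ((1 - r)/r) * Q powr 1 / P powr ((1 - r)/r)"
    using assms by (simp add: powr_powr powr_divide)
  also have "Q powr ((1 - r)/r) * Q powr 1 = Q powr (1/r)"
  proof -
    have "Q powr ((1 - r)/r) * Q powr 1 = Q powr ((1 - r)/r + 1)" by (simp only: powr_add)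
    also have "(1 - r)/r + 1 = 1/r" using assms by (simp add: field_simps)
    finally show ?thesis .
  qed
  finally have E: "((Q/P) powr (1/r)) powr (1 - r) * Q = Q powr (1/r) / P powr ((1 - r)/r)" .
  have F: "1 / P powr ((1 - r)/r) = P powr (1 - 1/r)"
  proof -
    have "- ((1 - r)/r) = 1 - 1/r" using assms by (simp add: field_simps)
    then show ?thesis by (simp add: powr_minus_divide[symmetric])
  qed
  show ?thesis unfolding E by (simp add: F[symmetric])
qed


lemma int_zero_imp:
  fixes \<phi> :: "real \<Rightarrow> real"
  assumes "continuous_on {0..T} \<phi>" "\<And>x. x \<in> {0..T} \<Longrightarrow> 0 \<le> \<phi> x"
    "integral {0..T} \<phi> = 0" "0 < T" "x \<in> {0..T}"
  shows "\<phi> x = 0"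
proof -
  have "(\<phi> has_integral integral {0..T} \<phi>) {0..T}"
    by (rule integrable_integral, rule integrable_continuous_real[OF assms(1)])
  then have "(\<phi> has_integral 0) (cbox 0 T)" using assms(3) by simp
  show ?thesis
  proof (rule has_integral_0_cbox_imp_0[of 0 T \<phi> x])
    show "continuous_on (cbox 0 T) \<phi>" using assms(1) by (simp add: cbox_interval)
    show "\<And>x. x \<in> box 0 T \<Longrightarrow> 0 \<le> \<phi> x" using assms(2) by (auto simp: box_real)
    show "(\<phi> has_integral 0) (cbox 0 T)" by fact
    show "box 0 T \<noteq> {}" using assms(4) by (simp add: box_real)
    show "x \<in> cbox 0 T" using assms(5) by (simp add: cbox_interval)
  qed
qed

context
  fixes a a' :: "real \<Rightarrow> 'a::real_normed_vector" and r T :: real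
  assumes r1: "1 \<le> r" and T0: "T > 0"
    and der: "\<And>t. t \<in> {0..T} \<Longrightarrow> (a has_vector_derivative a' t) (at t within {0..T})"
    and cont': "continuous_on {0..T} a'"
begin

lemma cont_a: "continuous_on {0..T} a"
  unfolding continuous_on_eq_continuous_within
  using der has_vector_derivative_continuous by blast

lemma cont_ee: "continuous_on {0..T} (\<lambda>x. ee r (norm (a x)))"
proof (cases "r = 1")
  case True then show ?thesis by (simp add: ee_def)
next
  case False
  then have "r - 1 > 0" using r1 by simp
  then have "continuous_on {0..T} (\<lambda>x. norm (a x) powr (r - 1))"
    by (intro continuous_on_powr' continuous_on_norm cont_a continuous_on_const) auto
  then show ?thesis using False by (simp add: ee_def)
qed

lemma cont_h: "continuous_on {0..T} (\<lambda>x. ee r (norm (a x)) * norm (a' x))"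
  by (intro continuous_intros cont_ee continuous_on_norm cont')

lemma int_h: "0 \<le> s \<Longrightarrow> t \<le> T \<Longrightarrow> (\<lambda>x. ee r (norm (a x)) * norm (a' x)) integrable_on {s..t}"
  by (rule integrable_continuous_real, rule continuous_on_subset[OF cont_h]) auto

lemma int_g: "0 \<le> s \<Longrightarrow> t \<le> T \<Longrightarrow> (\<lambda>x. norm (a' x)) integrable_on {s..t}"
  by (rule integrable_continuous_real, rule continuous_on_subset[OF continuous_on_norm[OF cont']]) auto

lemma ee_nonneg: "0 \<le> ee r x"
  by (simp add: ee_def)

lemma h_nonneg: "0 \<le> ee r (norm (a x)) * norm (a' x)"
  by (simp add: ee_nonneg)

lemma bound: assumes "0 \<le> s" "s \<le> t" "t \<le> T"
  shows "norm (a t - a s) \<le> integral {s..t} (\<lambda>x. norm (a' x))"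
proof (cases "s = t")
  case True then show ?thesis by simp
next
  case False
  then have st: "s < t" using assms by simp
  have cg: "continuous_on {s..t} (\<lambda>x. norm (a' x))"
    by (rule continuous_on_subset[OF continuous_on_norm[OF cont']]) (use assms in auto)
  have "norm (a t - a s) \<le> integral {s..t} (\<lambda>x. norm (a' x)) - integral {s..s} (\<lambda>x. norm (a' x))"
  proof (rule differentiable_bound_general[where f' = a' and \<phi>' = "\<lambda>x. norm (a' x)"])
    show "s < t" by fact
    show "continuous_on {s..t} a" by (rule continuous_on_subset[OF cont_a]) (use assms in auto)
    show "continuous_on {s..t} (\<lambda>x. integral {s..x} (\<lambda>x. norm (a' x)))"
      by (rule indefinite_integral_continuous_1, rule integrable_continuous_real, rule cg)
    fix x assume x: "s < x" "x < t"
    have "(a has_vector_derivative a' x) (at x within {0..T})" using der x assms by auto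
    then show "(a has_vector_derivative a' x) (at x)"
      using at_within_Icc_at[of 0 x T] x assms by auto
    have "((\<lambda>u. integral {s..u} (\<lambda>x. norm (a' x))) has_vector_derivative norm (a' x)) (at x within {s..t})"
      by (rule integral_has_vector_derivative[OF cg]) (use x in auto)
    then show "((\<lambda>u. integral {s..u} (\<lambda>x. norm (a' x))) has_vector_derivative norm (a' x)) (at x)"
      using at_within_Icc_at[of s x t] x by auto
    show "norm (a' x) \<le> norm (a' x)" by simp
  qed
  then show ?thesis by simp
qed

lemma ee_ge: assumes "0 < c" "c \<le> x" shows "c powr (r - 1) \<le> ee r x"
  using assms r1 by (auto simp: ee_def intro: powr_mono2)

lemma K: assumes "0 \<le> s" "s \<le> t" "t \<le> T" "0 < c" "\<And>x. x \<in> {s<..<t} \<Longrightarrow> c \<le> norm (a x)"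
  shows "c powr (r - 1) * norm (a t - a s) \<le> integral {s..t} (\<lambda>x. ee r (norm (a x)) * norm (a' x))"
proof -
  have "c powr (r - 1) * norm (a t - a s) \<le> c powr (r - 1) * integral {s..t} (\<lambda>x. norm (a' x))"
    by (rule mult_left_mono[OF bound[OF assms(1-3)] powr_ge_zero])
  also have "\<dots> = integral {s..t} (\<lambda>x. c powr (r - 1) * norm (a' x))"
    by (rule integral_mult_right[symmetric])
  also have "\<dots> = integral {s<..<t} (\<lambda>x. c powr (r - 1) * norm (a' x))"
    by (rule integral_open_interval_real)
  also have "\<dots> \<le> integral {s<..<t} (\<lambda>x. ee r (norm (a x)) * norm (a' x))"
  proof (rule integral_le)
    show "(\<lambda>x. c powr (r - 1) * norm (a' x)) integrable_on {s<..<t}"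
      unfolding integrable_on_open_interval_real
      by (rule integrable_continuous_real, intro continuous_intros continuous_on_subset[OF cont'])
        (use assms in auto)
    show "(\<lambda>x. ee r (norm (a x)) * norm (a' x)) integrable_on {s<..<t}"
      unfolding integrable_on_open_interval_real by (rule int_h[OF assms(1,3)])
    fix x assume "x \<in> {s<..<t}"
    then have "c powr (r - 1) \<le> ee r (norm (a x))" using ee_ge[OF assms(4) assms(5)] by blast
    then show "c powr (r - 1) * norm (a' x) \<le> ee r (norm (a x)) * norm (a' x)"
      by (rule mult_right_mono) simp
  qed
  also have "\<dots> = integral {s..t} (\<lambda>x. ee r (norm (a x)) * norm (a' x))"
    by (rule integral_open_interval_real[symmetric])
  finally show ?thesis .
qed

lemma cross:
  assumes "0 \<le> s" "s \<le> t" "t \<le> T" "\<rho> \<in> {s..t}" "\<tau> \<in> {s..t}" "norm (a \<rho>) < M/2" "norm (a \<tau>) = M"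
  shows "\<exists>p q. s \<le> p \<and> p \<le> q \<and> q \<le> t \<and> M/2 \<le> norm (a q - a p) \<and> (\<forall>x\<in>{p<..<q}. M/2 \<le> norm (a x))"
proof -
  have ca: "continuous_on {u..v} (\<lambda>x. norm (a x))" if "s \<le> u" "v \<le> t" for u v
    by (rule continuous_on_norm, rule continuous_on_subset[OF cont_a]) (use that assms in auto)
  have "\<rho> \<noteq> \<tau>" using assms by auto
  then consider "\<rho> < \<tau>" | "\<tau> < \<rho>" by linarith
  then show ?thesis
  proof cases
    case 1
    define S where "S = {\<rho>..\<tau>} \<inter> (\<lambda>x. norm (a x)) -` {..M/2}"
    have "closed S" unfolding S_def
      by (rule continuous_closed_preimage[OF ca]) (use assms in auto)
    moreover have "bounded S" unfolding S_def by (rule bounded_subset[of "{\<rho>..\<tau>}"]) auto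
    ultimately have "compact S" by (simp add: compact_eq_bounded_closed)
    moreover have "\<rho> \<in> S" using 1 assms by (auto simp: S_def)
    ultimately obtain \<sigma> where \<sigma>: "\<sigma> \<in> S" "\<And>y. y \<in> S \<Longrightarrow> y \<le> \<sigma>"
      using compact_attains_sup[of S] by blast
    have "M - M/2 \<le> norm (a \<tau>) - norm (a \<sigma>)" using \<sigma>(1) assms by (auto simp: S_def)
    also have "\<dots> \<le> norm (a \<tau> - a \<sigma>)" by (rule norm_triangle_ineq2)
    finally have "M/2 \<le> norm (a \<tau> - a \<sigma>)" by simp
    moreover have "\<forall>x\<in>{\<sigma><..<\<tau>}. M/2 \<le> norm (a x)"
    proof
      fix x assume x: "x \<in> {\<sigma><..<\<tau>}"
      show "M/2 \<le> norm (a x)"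
      proof (rule ccontr)
        assume "\<not> M/2 \<le> norm (a x)"
        then have "x \<in> S" using x \<sigma>(1) by (auto simp: S_def)
        then have "\<sigma> \<le> x" "x \<le> \<sigma>" using \<sigma>(2) x by auto
        then show False using x by simp
      qed
    qed
    moreover have "\<rho> \<le> \<sigma>" "\<sigma> \<le> \<tau>" using \<sigma>(1) by (auto simp: S_def)
    moreover have "s \<le> \<rho>" "\<tau> \<le> t" using assms(4,5) by auto
    ultimately show ?thesis
      by (intro exI[of _ \<sigma>] exI[of _ \<tau>] conjI) (assumption | linarith)+
  next
    case 2
    define S where "S = {\<tau>..\<rho>} \<inter> (\<lambda>x. norm (a x)) -` {..M/2}"
    have "closed S" unfolding S_def
      by (rule continuous_closed_preimage[OF ca]) (use assms in auto)
    moreover have "bounded S" unfolding S_def by (rule bounded_subset[of "{\<tau>..\<rho>}"]) auto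
    ultimately have "compact S" by (simp add: compact_eq_bounded_closed)
    moreover have "\<rho> \<in> S" using 2 assms by (auto simp: S_def)
    ultimately obtain \<sigma> where \<sigma>: "\<sigma> \<in> S" "\<And>y. y \<in> S \<Longrightarrow> \<sigma> \<le> y"
      using compact_attains_inf[of S] by blast
    have "M - M/2 \<le> norm (a \<tau>) - norm (a \<sigma>)" using \<sigma>(1) assms by (auto simp: S_def)
    also have "\<dots> \<le> norm (a \<tau> - a \<sigma>)" by (rule norm_triangle_ineq2)
    finally have "M/2 \<le> norm (a \<tau> - a \<sigma>)" by simp
    then have "M/2 \<le> norm (a \<sigma> - a \<tau>)" by (metis norm_minus_commute)
    moreover have "\<forall>x\<in>{\<tau><..<\<sigma>}. M/2 \<le> norm (a x)"
    proof
      fix x assume x: "x \<in> {\<tau><..<\<sigma>}"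
      show "M/2 \<le> norm (a x)"
      proof (rule ccontr)
        assume "\<not> M/2 \<le> norm (a x)"
        then have "x \<in> S" using x \<sigma>(1) by (auto simp: S_def)
        then have "\<sigma> \<le> x" "x \<le> \<sigma>" using \<sigma>(2) x by auto
        then show False using x by simp
      qed
    qed
    moreover have "\<tau> \<le> \<sigma>" "\<sigma> \<le> \<rho>" using \<sigma>(1) by (auto simp: S_def)
    moreover have "s \<le> \<tau>" "\<rho> \<le> t" using assms(4,5) by auto
    ultimately show ?thesis
      by (intro exI[of _ \<tau>] exI[of _ \<sigma>] conjI) (assumption | linarith)+
  qed
qed


lemma per_interval: assumes "0 \<le> s" "s \<le> t" "t \<le> T"
  shows "norm (a t - a s) powr r \<le> 4 powr r * integral {s..t} (\<lambda>x. ee r (norm (a x)) * norm (a' x))"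
proof -
  define I where "I = integral {s..t} (\<lambda>x. ee r (norm (a x)) * norm (a' x))"
  define d where "d = norm (a t - a s)"
  have I0: "0 \<le> I" unfolding I_def by (rule integral_nonneg[OF int_h[OF assms(1,3)]]) (simp add: h_nonneg)
  have Isub: "integral {p..q} (\<lambda>x. ee r (norm (a x)) * norm (a' x)) \<le> I" if "s \<le> p" "p \<le> q" "q \<le> t" for p q
    unfolding I_def
    by (rule integral_subset_le) (use that assms in \<open>auto intro: int_h simp: h_nonneg\<close>)
  have ca: "continuous_on {s..t} (\<lambda>x. norm (a x))"
    by (rule continuous_on_norm, rule continuous_on_subset[OF cont_a]) (use assms in auto)
  show ?thesis
  proof (cases "d = 0")
    case True then show ?thesis using I0 r1 by (simp add: d_def I_def[symmetric])
  next
    case False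
    then have d0: "0 < d" by (simp add: d_def)
    obtain \<tau> where \<tau>: "\<tau> \<in> {s..t}" "\<And>y. y \<in> {s..t} \<Longrightarrow> norm (a y) \<le> norm (a \<tau>)"
      using continuous_attains_sup[OF compact_Icc _ ca] assms by auto
    obtain \<rho> where \<rho>: "\<rho> \<in> {s..t}" "\<And>y. y \<in> {s..t} \<Longrightarrow> norm (a \<rho>) \<le> norm (a y)"
      using continuous_attains_inf[OF compact_Icc _ ca] assms by auto
    define M where "M = norm (a \<tau>)"
    have "d \<le> norm (a t) + norm (a s)" unfolding d_def by (rule norm_triangle_ineq4)
    also have "\<dots> \<le> 2 * M" using \<tau>(2)[of t] \<tau>(2)[of s] assms by (simp add: M_def)
    finally have dM: "d/4 \<le> M/2" by simp
    have main: "(d/4) powr r \<le> I"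
    proof (cases "M/2 \<le> norm (a \<rho>)")
      case True
      have "(M/2) powr (r - 1) * d \<le> I" unfolding I_def d_def
      proof (rule K[OF assms])
        show "0 < M/2" using d0 dM by simp
        fix x assume "x \<in> {s<..<t}"
        then have "norm (a \<rho>) \<le> norm (a x)" using \<rho>(2) by auto
        then show "M/2 \<le> norm (a x)" using True by simp
      qed
      moreover have "(d/4) powr r = (d/4) powr (r - 1) * (d/4)"
      proof -
        have "(d/4) powr r = (d/4) powr ((r - 1) + 1)" by simp
        also have "\<dots> = (d/4) powr (r - 1) * (d/4) powr 1" by (rule powr_add)
        finally show ?thesis using d0 by simp
      qed
      moreover have "(d/4) powr (r - 1) \<le> (M/2) powr (r - 1)"
        by (rule powr_mono2) (use r1 d0 dM in auto)
      ultimately have "(d/4) powr r \<le> (M/2) powr (r - 1) * (d/4)"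
        using d0 by (metis less_eq_real_def mult_right_mono zero_less_divide_iff zero_less_numeral)
      also have "\<dots> \<le> (M/2) powr (r - 1) * d"
        using d0 by (intro mult_left_mono) auto
      finally show ?thesis using \<open>(M/2) powr (r - 1) * d \<le> I\<close> by linarith
    next
      case False
      have ex: "\<exists>p q. s \<le> p \<and> p \<le> q \<and> q \<le> t \<and> M/2 \<le> norm (a q - a p) \<and> (\<forall>x\<in>{p<..<q}. M/2 \<le> norm (a x))"
        by (rule cross[OF assms \<rho>(1) \<tau>(1)]) (use False in linarith, simp add: M_def)
      then obtain p q where pq: "s \<le> p" "p \<le> q" "q \<le> t" "M/2 \<le> norm (a q - a p)"
        "\<forall>x\<in>{p<..<q}. M/2 \<le> norm (a x)"
        by blast
      have M0: "0 < M" using d0 dM by simp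
      have "(M/2) powr (r - 1) * norm (a q - a p) \<le> integral {p..q} (\<lambda>x. ee r (norm (a x)) * norm (a' x))"
      proof (rule K)
        show "0 \<le> p" using pq(1) assms(1) by linarith
        show "p \<le> q" by (rule pq(2))
        show "q \<le> T" using pq(3) assms(3) by linarith
        show "0 < M/2" using M0 by simp
        show "\<And>x. x \<in> {p<..<q} \<Longrightarrow> M/2 \<le> norm (a x)" using pq(5) by blast
      qed
      also have "\<dots> \<le> I" by (rule Isub[OF pq(1-3)])
      finally have 1: "(M/2) powr (r - 1) * norm (a q - a p) \<le> I" .
      have "(M/2) powr r = (M/2) powr (r - 1) * (M/2)"
      proof -
        have "(M/2) powr r = (M/2) powr ((r - 1) + 1)" by simp
        also have "\<dots> = (M/2) powr (r - 1) * (M/2) powr 1" by (rule powr_add)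
        finally show ?thesis using M0 by simp
      qed
      also have "\<dots> \<le> (M/2) powr (r - 1) * norm (a q - a p)"
        by (rule mult_left_mono[OF pq(4)]) simp
      finally have "(M/2) powr r \<le> I" using 1 by linarith
      moreover have "(d/4) powr r \<le> (M/2) powr r"
        by (rule powr_mono2) (use r1 d0 dM in auto)
      ultimately show ?thesis by linarith
    qed
    have "d powr r = (4 * (d/4)) powr r" by simp
    also have "\<dots> = 4 powr r * (d/4) powr r" using d0 by (subst powr_mult) auto
    also have "\<dots> \<le> 4 powr r * I" using main by (rule mult_left_mono) simp
    finally show ?thesis unfolding d_def I_def .
  qed
qed


lemma cont_F: "continuous_on {0..T} (\<lambda>x. norm (a x) powr r)"
  by (intro continuous_on_powr' continuous_on_norm cont_a continuous_on_const) (use r1 in auto)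

lemma cont_G: "continuous_on {0..T} (\<lambda>x. norm (a' x) powr r)"
  by (intro continuous_on_powr' continuous_on_norm cont' continuous_on_const) (use r1 in auto)

lemma sum_bound:
  assumes "\<forall>j\<le>J. t j \<in> {0..T}" "\<forall>j<J. t j < t (Suc j)"
  shows "t 0 \<le> t J \<and> (\<Sum>j\<in>{1..J}. norm (a (t j) - a (t (j - 1))) powr r)
     \<le> 4 powr r * integral {t 0..t J} (\<lambda>x. ee r (norm (a x)) * norm (a' x))"
  using assms
proof (induction J)
  case 0
  then show ?case by simp
next
  case (Suc J)
  have A1: "\<forall>j\<le>J. t j \<in> {0..T}" using Suc.prems(1) le_SucI by blast
  have A2: "\<forall>j<J. t j < t (Suc j)" using Suc.prems(2) less_SucI by blast
  have ih: "t 0 \<le> t J \<and> (\<Sum>j\<in>{1..J}. norm (a (t j) - a (t (j - 1))) powr r)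
     \<le> 4 powr r * integral {t 0..t J} (\<lambda>x. ee r (norm (a x)) * norm (a' x))"
    by (rule Suc.IH[OF A1 A2])
  have t0: "t 0 \<in> {0..T}" using Suc.prems(1) by blast
  have tJ: "t J \<in> {0..T}" using Suc.prems(1) by simp
  have tS: "t (Suc J) \<in> {0..T}" using Suc.prems(1) by blast
  have lt: "t J < t (Suc J)" using Suc.prems(2) by blast
  have step: "norm (a (t (Suc J)) - a (t J)) powr r
      \<le> 4 powr r * integral {t J..t (Suc J)} (\<lambda>x. ee r (norm (a x)) * norm (a' x))"
    by (rule per_interval) (use tJ tS lt in auto)
  have comb: "integral {t 0..t J} (\<lambda>x. ee r (norm (a x)) * norm (a' x))
      + integral {t J..t (Suc J)} (\<lambda>x. ee r (norm (a x)) * norm (a' x))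
      = integral {t 0..t (Suc J)} (\<lambda>x. ee r (norm (a x)) * norm (a' x))"
    by (rule Henstock_Kurzweil_Integration.integral_combine) (use ih lt t0 tS in \<open>auto intro: int_h\<close>)
  have "(\<Sum>j\<in>{1..Suc J}. norm (a (t j) - a (t (j - 1))) powr r)
      = (\<Sum>j\<in>{1..J}. norm (a (t j) - a (t (j - 1))) powr r) + norm (a (t (Suc J)) - a (t J)) powr r"
    by simp
  also have "\<dots> \<le> 4 powr r * integral {t 0..t J} (\<lambda>x. ee r (norm (a x)) * norm (a' x))
      + 4 powr r * integral {t J..t (Suc J)} (\<lambda>x. ee r (norm (a x)) * norm (a' x))"
    using ih step by linarith
  also have "\<dots> = 4 powr r * integral {t 0..t (Suc J)} (\<lambda>x. ee r (norm (a x)) * norm (a' x))"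
    using comb by (simp add: distrib_left[symmetric])
  finally show ?case using ih lt by linarith
qed

lemma holder:
  assumes P0: "0 < integral {0..T} (\<lambda>x. norm (a x) powr r)"
  shows "integral {0..T} (\<lambda>x. ee r (norm (a x)) * norm (a' x))
    \<le> integral {0..T} (\<lambda>x. norm (a x) powr r) powr (1 - 1/r) * integral {0..T} (\<lambda>x. norm (a' x) powr r) powr (1/r)"
proof -
  define P where "P = integral {0..T} (\<lambda>x. norm (a x) powr r)"
  define Q where "Q = integral {0..T} (\<lambda>x. norm (a' x) powr r)"
  have iF: "(\<lambda>x. norm (a x) powr r) integrable_on {0..T}" by (rule integrable_continuous_real[OF cont_F])
  have iG: "(\<lambda>x. norm (a' x) powr r) integrable_on {0..T}" by (rule integrable_continuous_real[OF cont_G])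
  have Q0: "0 \<le> Q" unfolding Q_def by (rule integral_nonneg[OF iG]) simp
  have P0': "0 < P" using P0 by (simp add: P_def)
  show ?thesis
  proof (cases "Q = 0")
    case True
    have "integral {0..T} (\<lambda>x. ee r (norm (a x)) * norm (a' x)) = integral {0..T} (\<lambda>x. 0)"
    proof (rule integral_cong)
      fix x assume x: "x \<in> {0..T}"
      have "norm (a' x) powr r = 0"
        by (rule int_zero_imp[OF cont_G _ _ T0 x]) (use True in \<open>auto simp: Q_def\<close>)
      then show "ee r (norm (a x)) * norm (a' x) = 0" by simp
    qed
    then show ?thesis by simp
  next
    case False
    then have Q0': "0 < Q" using Q0 by simp
    define l where "l = (Q/P) powr (1/r)"
    have l0: "0 < l" unfolding l_def using P0' Q0' by simp
    define A where "A = (1 - 1/r) * l"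
    define B where "B = (1/r) * l powr (1 - r)"
    have "integral {0..T} (\<lambda>x. ee r (norm (a x)) * norm (a' x))
        \<le> integral {0..T} (\<lambda>x. A * norm (a x) powr r + B * norm (a' x) powr r)"
    proof (rule integral_le)
      show "(\<lambda>x. ee r (norm (a x)) * norm (a' x)) integrable_on {0..T}"
        by (rule int_h) auto
      show "(\<lambda>x. A * norm (a x) powr r + B * norm (a' x) powr r) integrable_on {0..T}"
        by (rule integrable_continuous_real, intro continuous_intros cont_F cont_G)
      fix x assume "x \<in> {0..T}"
      have "ee r (norm (a x)) * norm (a' x)
          \<le> (1 - 1/r) * (l * norm (a x) powr r) + (1/r) * (l powr (1 - r) * norm (a' x) powr r)"
        by (rule young_pt) (use l0 r1 in auto)
      then show "ee r (norm (a x)) * norm (a' x) \<le> A * norm (a x) powr r + B * norm (a' x) powr r"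
        by (simp add: A_def B_def algebra_simps)
    qed
    also have "\<dots> = A * P + B * Q"
    proof -
      have "integral {0..T} (\<lambda>x. A * norm (a x) powr r + B * norm (a' x) powr r)
          = integral {0..T} (\<lambda>x. A * norm (a x) powr r) + integral {0..T} (\<lambda>x. B * norm (a' x) powr r)"
        by (rule integral_add; rule integrable_continuous_real, intro continuous_intros cont_F cont_G)
      then show ?thesis by (simp add: P_def Q_def)
    qed
    also have "\<dots> = (1 - 1/r) * (P powr (1 - 1/r) * Q powr (1/r)) + (1/r) * (P powr (1 - 1/r) * Q powr (1/r))"
    proof -
      have "A * P = (1 - 1/r) * ((Q/P) powr (1/r) * P)" by (simp add: A_def l_def)
      also have "\<dots> = (1 - 1/r) * (P powr (1 - 1/r) * Q powr (1/r))" using alg1[OF P0' Q0' r1] by simp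
      finally have 1: "A * P = \<dots>" .
      have "B * Q = (1/r) * (((Q/P) powr (1/r)) powr (1 - r) * Q)" by (simp add: B_def l_def)
      also have "\<dots> = (1/r) * (P powr (1 - 1/r) * Q powr (1/r))" using alg2[OF P0' Q0' r1] by simp
      finally have 2: "B * Q = \<dots>" .
      show ?thesis using 1 2 by simp
    qed
    also have "\<dots> = P powr (1 - 1/r) * Q powr (1/r)" by (simp add: algebra_simps)
    finally show ?thesis by (simp add: P_def Q_def)
  qed
qed

end


theorem lemmaB1:
  fixes a a' :: "real \<Rightarrow> 'a::real_normed_vector" and r T :: real
  assumes "1 \<le> r" and "T > 0"
    and "\<And>t. t \<in> {0..T} \<Longrightarrow> (a has_vector_derivative a' t) (at t within {0..T})"
    and "continuous_on {0..T} a'"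
  shows "rvar r a {0..T} \<le> ereal (8 * Lr_norm r T a powr (1 - 1 / r) * Lr_norm r T a' powr (1 / r))"
proof -
  define P where "P = integral {0..T} (\<lambda>x. norm (a x) powr r)"
  define Q where "Q = integral {0..T} (\<lambda>x. norm (a' x) powr r)"
  have r0: "0 < r" using assms(1) by simp
  have P0: "0 \<le> P" unfolding P_def
    by (rule integral_nonneg[OF integrable_continuous_real[OF cont_F[OF assms]]]) auto
  have Q0: "0 \<le> Q" unfolding Q_def
    by (rule integral_nonneg[OF integrable_continuous_real[OF cont_G[OF assms]]]) auto
  have RHS: "8 * Lr_norm r T a powr (1 - 1 / r) * Lr_norm r T a' powr (1 / r)
      = 8 * (P powr (1/r * (1 - 1/r)) * Q powr (1/r * (1/r)))"
    unfolding Lr_norm_def P_def[symmetric] Q_def[symmetric] by (simp add: powr_powr)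
  have RHS0: "0 \<le> 8 * (P powr (1/r * (1 - 1/r)) * Q powr (1/r * (1/r)))" by simp
  show ?thesis
    unfolding rvar_def
  proof (rule SUP_least)
    fix p assume "p \<in> {(J, t). (\<forall>j\<le>J. t j \<in> {0..T}) \<and> (\<forall>j<J. t j < t (Suc j))}"
    then obtain J t where p: "p = (J, t)" and h1: "\<forall>j\<le>J. t j \<in> {0..T}" and h2: "\<forall>j<J. t j < t (Suc j)"
      by blast
    define S where "S = (\<Sum>j\<in>{1..J}. norm (a (t j) - a (t (j - 1))) powr r)"
    have S0: "0 \<le> S" unfolding S_def by (intro sum_nonneg) simp
    have "S powr (1/r) \<le> 8 * (P powr (1/r * (1 - 1/r)) * Q powr (1/r * (1/r)))"
    proof (cases "P = 0")
      case True
      have "S = 0" unfolding S_def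
      proof (rule sum.neutral, rule ballI)
        fix j assume j: "j \<in> {1..J}"
        have z: "a x = 0" if "x \<in> {0..T}" for x
        proof -
          have "norm (a x) powr r = 0"
            by (rule int_zero_imp[OF cont_F[OF assms] _ _ assms(2) that]) (use True in \<open>auto simp: P_def\<close>)
          then show ?thesis by simp
        qed
        have "t j \<in> {0..T}" using h1 j by simp
        moreover have "t (j - 1) \<in> {0..T}" using h1 j by (meson atLeastAtMost_iff diff_le_self le_trans)
        ultimately show "norm (a (t j) - a (t (j - 1))) powr r = 0" using z by simp
      qed
      then show ?thesis using RHS0 by simp
    next
      case False
      then have P0': "0 < P" using P0 by simp
      have sb: "t 0 \<le> t J \<and> S \<le> 4 powr r * integral {t 0..t J} (\<lambda>x. ee r (norm (a x)) * norm (a' x))"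
        unfolding S_def by (rule sum_bound[OF assms h1 h2])
      have t0: "t 0 \<in> {0..T}" using h1 by blast
      have tJ: "t J \<in> {0..T}" using h1 by blast
      have "integral {t 0..t J} (\<lambda>x. ee r (norm (a x)) * norm (a' x))
          \<le> integral {0..T} (\<lambda>x. ee r (norm (a x)) * norm (a' x))"
      proof (rule integral_subset_le)
        show "{t 0..t J} \<subseteq> {0..T}" using t0 tJ by auto
        show "(\<lambda>x. ee r (norm (a x)) * norm (a' x)) integrable_on {t 0..t J}"
          by (rule int_h[OF assms]) (use t0 tJ in auto)
        show "(\<lambda>x. ee r (norm (a x)) * norm (a' x)) integrable_on {0..T}"
          by (rule int_h[OF assms]) auto
        show "\<forall>x\<in>{0..T}. 0 \<le> ee r (norm (a x)) * norm (a' x)"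
          by (simp add: ee_def)
      qed
      also have "\<dots> \<le> P powr (1 - 1/r) * Q powr (1/r)"
        unfolding P_def Q_def by (rule holder[OF assms]) (simp_all add: P0'[unfolded P_def])
      finally have "S \<le> 4 powr r * (P powr (1 - 1/r) * Q powr (1/r))"
        using sb by (smt (verit) mult_left_mono powr_ge_zero)
      then have "S powr (1/r) \<le> (4 powr r * (P powr (1 - 1/r) * Q powr (1/r))) powr (1/r)"
        using S0 r0 by (intro powr_mono2) auto
      also have "\<dots> = 4 * (P powr (1/r * (1 - 1/r)) * Q powr (1/r * (1/r)))"
        using r0 by (simp add: powr_mult powr_powr mult.commute)
      also have "\<dots> \<le> 8 * (P powr (1/r * (1 - 1/r)) * Q powr (1/r * (1/r)))"
        by (rule mult_right_mono) simp_all
      finally show ?thesis .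
    qed
    then show "ereal ((\<Sum>j\<in>{1..fst p}. norm (a (snd p j) - a (snd p (j - 1))) powr r) powr (1 / r))
        \<le> ereal (8 * Lr_norm r T a powr (1 - 1 / r) * Lr_norm r T a' powr (1 / r))"
      unfolding RHS by (simp add: p S_def)
  qed
qed

end
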